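(* Let $G$ be a relation on a finite set $K$ with $Dom(G)=K$. (a) For $\mathbf{s}\in K_G$ there exist a $G$ basic set $B$ and $k\in\mathbb{Z}_+$ such that $s_i\in B$ and $S^i(\mathbf{s})\in B_G$ for all $i\ge k$; this $B$ is denoted $End(\mathbf{s})$, and $\omega S(\mathbf{s})\subset B_G$. (b) If $B$ is a $G$ basic set then $B_G$ is an $S$ basic set of $(K_G,S)$ and $S|_{B_G}$ is topologically transitive; moreover $B\mapsto B_G$ is a bijection from the $G$ basic sets onto the $S$ basic sets in $K_G$. (c) For $A\subset K$: $\mathcal{O}G(A)\subset A$ iff for all $\mathbf{s}\in K_G$, ($\mathbf{s}\in A_G\Leftrightarrow s_0\in A$). These conditions imply that $\mathcal{C}S(A_G)\subset A_G$, that $A_G$ is clopen in $K_G$, and that $\{\mathbf{s}:End(\mathbf{s})\subset A\}$ is open in $K_G$. (d) For every $s\in K$ there is $\mathbf{s}\in K_G$ with $s_0=s$ and $End(\mathbf{s})$ a terminal $G$ basic set. (e) For a $G$ basic set $B$ the following are equivalent: (i) $B$ is a terminal $G$ basic set; (ii) $B_G$ is a terminal $S$ basic set; (iii) $B_G$ is a visible $S$ basic set; (iv) $B_G$ is clopen in $K_G$; (v) $B_G$ is an attractor for $S$; (vi) $\{\mathbf{s}:End(\mathbf{s})=B\}$ is open in $K_G$. (f) $\{\mathbf{s}\in K_G:End(\mathbf{s})$ is a terminal $G$ basic set$\}$ is a dense open subset of $K_G$.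
   Context: $K$ is a finite set, $G\subset K\times K$ a relation, $Dom(G)=\{s:\exists t,(s,t)\in G\}$. $K^{\mathbb{Z}_+}$ carries the metric $d(\mathbf{s},\mathbf{t})=\inf\{1/(k+1): s_i=t_i\ \forall i<k\}$ and the shift $S(\mathbf{s})_i=s_{i+1}$. $K_G=\{\mathbf{s}\in K^{\mathbb{Z}_+}:(s_i,s_{i+1})\in G\ \forall i\}$, with $S$ restricted to it; for $A\subset K$, $A_G=K_G\cap A^{\mathbb{Z}_+}$. $\mathcal{O}G=\bigcup_{n\ge1}G^n$ (relational powers). $G$ basic sets are the equivalence classes of $\{s:(s,s)\in\mathcal{O}G\}$ under "$(s,t)\in\mathcal{O}G$ and $(t,s)\in\mathcal{O}G$"; a $G$ basic set $B$ is terminal if $\mathcal{O}G(B)\subset B$. For the map $S$ on the compact metric space $K_G$: $\mathcal{C}S$ is the chain relation ($(x,y)\in\mathcal{C}S$ iff for all $\epsilon>0$ there is an $\epsilon$-chain $x=x_0,\dots,x_n=y$, $n\ge1$, $d(S(x_i),x_{i+1})\le\epsilon$), $S$ basic sets are equivalence classes of chain recurrent points under mutual chain reachability, terminal means $\mathcal{C}S(B)\subset B$, $\omega S(\mathbf{s})$ is the limit set of the forward orbit, the basin of $B$ is $\operatorname{int}\{\mathbf{s}:\omega S(\mathbf{s})\subset B\}$, visible means nonempty basin, and an attractor is $\bigcap_{n\ge0}S^n(U)$ for a closed $U$ with $S(U)\subset\operatorname{int}U$. *)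

theory Defs
  imports "HOL-Analysis.Analysis"
begin

definition OG :: "('a \<times> 'a) set \<Rightarrow> ('a \<times> 'a) set" where
  "OG G = (\<Union>n\<in>{1..}. G ^^ n)"

definition G_basic :: "('a \<times> 'a) set \<Rightarrow> 'a set \<Rightarrow> bool" where
  "G_basic G B \<longleftrightarrow> (\<exists>s. (s, s) \<in> OG G \<and>
      B = {t. (t, t) \<in> OG G \<and> (s, t) \<in> OG G \<and> (t, s) \<in> OG G})"

definition G_terminal :: "('a \<times> 'a) set \<Rightarrow> 'a set \<Rightarrow> bool" where
  "G_terminal G B \<longleftrightarrow> G_basic G B \<and> OG G `` B \<subseteq> B"

definition seqdist :: "(nat \<Rightarrow> 'a) \<Rightarrow> (nat \<Rightarrow> 'a) \<Rightarrow> real" where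
  "seqdist s t = Inf {1 / (real k + 1) | k. \<forall>i<k. s i = t i}"

definition shift :: "(nat \<Rightarrow> 'a) \<Rightarrow> (nat \<Rightarrow> 'a)" where
  "shift s = (\<lambda>i. s (Suc i))"

definition KG :: "'a set \<Rightarrow> ('a \<times> 'a) set \<Rightarrow> (nat \<Rightarrow> 'a) set" where
  "KG K G = {s. (\<forall>i. s i \<in> K) \<and> (\<forall>i. (s i, s (Suc i)) \<in> G)}"

definition subG :: "'a set \<Rightarrow> ('a \<times> 'a) set \<Rightarrow> 'a set \<Rightarrow> (nat \<Rightarrow> 'a) set" where
  "subG K G A = KG K G \<inter> {s. \<forall>i. s i \<in> A}"

definition KGtop :: "'a set \<Rightarrow> ('a \<times> 'a) set \<Rightarrow> (nat \<Rightarrow> 'a) topology" where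
  "KGtop K G = Metric_space.mtopology (KG K G) seqdist"

definition chainS :: "'a set \<Rightarrow> ('a \<times> 'a) set \<Rightarrow> ((nat \<Rightarrow> 'a) \<times> (nat \<Rightarrow> 'a)) set" where
  "chainS K G = {(x, y). x \<in> KG K G \<and> y \<in> KG K G \<and>
     (\<forall>\<epsilon>>0. \<exists>n\<ge>1. \<exists>c :: nat \<Rightarrow> (nat \<Rightarrow> 'a). c 0 = x \<and> c n = y \<and>
        (\<forall>i\<le>n. c i \<in> KG K G) \<and> (\<forall>i<n. seqdist (shift (c i)) (c (Suc i)) \<le> \<epsilon>))}"

definition S_basic :: "'a set \<Rightarrow> ('a \<times> 'a) set \<Rightarrow> (nat \<Rightarrow> 'a) set \<Rightarrow> bool" where
  "S_basic K G B \<longleftrightarrow> (\<exists>x. (x, x) \<in> chainS K G \<and>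
     B = {y. (y, y) \<in> chainS K G \<and> (x, y) \<in> chainS K G \<and> (y, x) \<in> chainS K G})"

definition S_terminal :: "'a set \<Rightarrow> ('a \<times> 'a) set \<Rightarrow> (nat \<Rightarrow> 'a) set \<Rightarrow> bool" where
  "S_terminal K G B \<longleftrightarrow> S_basic K G B \<and> chainS K G `` B \<subseteq> B"

definition omegaS :: "'a set \<Rightarrow> ('a \<times> 'a) set \<Rightarrow> (nat \<Rightarrow> 'a) \<Rightarrow> (nat \<Rightarrow> 'a) set" where
  "omegaS K G s = {y \<in> KG K G. \<forall>\<epsilon>>0. \<forall>N. \<exists>n\<ge>N. seqdist ((shift ^^ n) s) y < \<epsilon>}"

definition basin :: "'a set \<Rightarrow> ('a \<times> 'a) set \<Rightarrow> (nat \<Rightarrow> 'a) set \<Rightarrow> (nat \<Rightarrow> 'a) set" where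
  "basin K G B = (KGtop K G) interior_of {s \<in> KG K G. omegaS K G s \<subseteq> B}"

definition visible :: "'a set \<Rightarrow> ('a \<times> 'a) set \<Rightarrow> (nat \<Rightarrow> 'a) set \<Rightarrow> bool" where
  "visible K G B \<longleftrightarrow> basin K G B \<noteq> {}"

definition attractor :: "'a set \<Rightarrow> ('a \<times> 'a) set \<Rightarrow> (nat \<Rightarrow> 'a) set \<Rightarrow> bool" where
  "attractor K G A \<longleftrightarrow> (\<exists>U. closedin (KGtop K G) U \<and>
      shift ` U \<subseteq> (KGtop K G) interior_of U \<and> A = (\<Inter>n. (shift ^^ n) ` U))"

definition top_transitive :: "'a set \<Rightarrow> ('a \<times> 'a) set \<Rightarrow> (nat \<Rightarrow> 'a) set \<Rightarrow> bool" where
  "top_transitive K G X \<longleftrightarrow> shift ` X \<subseteq> X \<and>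
     (\<forall>U V. openin (subtopology (KGtop K G) X) U \<longrightarrow> openin (subtopology (KGtop K G) X) V \<longrightarrow>
        U \<noteq> {} \<longrightarrow> V \<noteq> {} \<longrightarrow> (\<exists>n\<ge>1. (shift ^^ n) ` U \<inter> V \<noteq> {}))"

definition EndS :: "'a set \<Rightarrow> ('a \<times> 'a) set \<Rightarrow> (nat \<Rightarrow> 'a) \<Rightarrow> 'a set" where
  "EndS K G s = (THE B. G_basic G B \<and>
      (\<exists>k. \<forall>i\<ge>k. s i \<in> B \<and> (shift ^^ i) s \<in> subG K G B))"

end

theory Submission
  imports Defs
begin


lemma seqdist_formula:
  "seqdist s t = (if s = t then 0 else 1 / (real (LEAST i. s i \<noteq> t i) + 1))"
proof (cases "s = t")
  case True
  have ne: "{1 / (real k + 1) | k. \<forall>i<k. s i = t i} \<noteq> {}" by auto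
  have bdd: "bdd_below {1 / (real k + 1) | k. \<forall>i<k. s i = t i}"
    by (rule bdd_belowI[of _ 0]) auto
  have ge: "seqdist s t \<ge> 0" unfolding seqdist_def
    by (rule cInf_greatest[OF ne]) auto
  have le: "seqdist s t \<le> 1 / (real k + 1)" for k unfolding seqdist_def
    by (rule cInf_lower[OF _ bdd]) (use True in auto)
  have "seqdist s t \<le> 0"
  proof (rule ccontr)
    assume "\<not> seqdist s t \<le> 0"
    then obtain n where "inverse (real (Suc n)) < seqdist s t"
      using reals_Archimedean by (metis not_le)
    with le[of n] show False by (simp add: field_simps)
  qed
  with ge True show ?thesis by simp
next
  case False
  define p where "p = (LEAST i. s i \<noteq> t i)"
  have ex: "\<exists>i. s i \<noteq> t i" using False by auto
  have sp: "s p \<noteq> t p" unfolding p_def by (rule LeastI_ex[OF ex])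
  have bel: "i < p \<Longrightarrow> s i = t i" for i unfolding p_def using not_less_Least by blast
  have eqS: "{1 / (real k + 1) | k. \<forall>i<k. s i = t i} = {1 / (real k + 1) | k. k \<le> p}"
  proof -
    have "(\<forall>i<k. s i = t i) \<longleftrightarrow> k \<le> p" for k
      using bel sp by (meson le_less_trans not_le order_refl)
    then show ?thesis by auto
  qed
  have "seqdist s t = 1 / (real p + 1)" unfolding seqdist_def eqS
    by (rule cInf_eq_minimum) (auto simp: frac_le)
  then show ?thesis using False p_def by simp
qed

lemma seqdist_nonneg: "seqdist s t \<ge> 0"
  by (simp add: seqdist_formula)

lemma seqdist_commute: "seqdist s t = seqdist t s"
proof -
  have "(LEAST i. s i \<noteq> t i) = (LEAST i. t i \<noteq> s i)" by metis
  then show ?thesis by (auto simp: seqdist_formula)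
qed

lemma seqdist_zero: "seqdist s t = 0 \<longleftrightarrow> s = t"
  by (simp add: seqdist_formula add_pos_nonneg)

lemma seqdist_le: "seqdist s t \<le> 1 / (real m + 1) \<longleftrightarrow> (\<forall>i<m. s i = t i)"
proof (cases "s = t")
  case True then show ?thesis by (simp add: seqdist_formula)
next
  case False
  define p where "p = (LEAST i. s i \<noteq> t i)"
  have ex: "\<exists>i. s i \<noteq> t i" using False by auto
  have sp: "s p \<noteq> t p" unfolding p_def by (rule LeastI_ex[OF ex])
  have bel: "i < p \<Longrightarrow> s i = t i" for i unfolding p_def using not_less_Least by blast
  have "seqdist s t = 1 / (real p + 1)" using False p_def by (simp add: seqdist_formula)
  moreover have "1 / (real p + 1) \<le> 1 / (real m + 1) \<longleftrightarrow> m \<le> p"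
    by (simp add: frac_le_eq field_simps)
  moreover have "m \<le> p \<longleftrightarrow> (\<forall>i<m. s i = t i)"
    using bel sp by (meson le_less_trans not_le order_refl)
  ultimately show ?thesis by simp
qed

lemma seqdist_less: "seqdist s t < 1 / (real m + 1) \<longleftrightarrow> (\<forall>i\<le>m. s i = t i)"
proof (cases "s = t")
  case True then show ?thesis by (simp add: seqdist_formula)
next
  case False
  define p where "p = (LEAST i. s i \<noteq> t i)"
  have ex: "\<exists>i. s i \<noteq> t i" using False by auto
  have sp: "s p \<noteq> t p" unfolding p_def by (rule LeastI_ex[OF ex])
  have bel: "i < p \<Longrightarrow> s i = t i" for i unfolding p_def using not_less_Least by blast
  have "seqdist s t = 1 / (real p + 1)" using False p_def by (simp add: seqdist_formula)
  moreover have "1 / (real p + 1) < 1 / (real m + 1) \<longleftrightarrow> m < p"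
    by (simp add: field_simps)
  moreover have "m < p \<longleftrightarrow> (\<forall>i\<le>m. s i = t i)"
    using bel sp by (metis not_le le_less_trans)
  ultimately show ?thesis by simp
qed

lemma seqdist_triangle: "seqdist x z \<le> seqdist x y + seqdist y z"
proof (cases "x = z")
  case True then show ?thesis by (simp add: seqdist_formula add_nonneg_nonneg)
next
  case False
  define p where "p = (LEAST i. x i \<noteq> z i)"
  have ex: "\<exists>i. x i \<noteq> z i" using False by auto
  have sp: "x p \<noteq> z p" unfolding p_def by (rule LeastI_ex[OF ex])
  have d: "seqdist x z = 1 / (real p + 1)" using False p_def by (simp add: seqdist_formula)
  have "seqdist x y \<ge> 1 / (real p + 1) \<or> seqdist y z \<ge> 1 / (real p + 1)"
    using seqdist_less[of x y p] seqdist_less[of y z p] sp by force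
  then show ?thesis using d seqdist_nonneg[of x y] seqdist_nonneg[of y z] by linarith
qed

lemma Metric_space_seqdist: "Metric_space M seqdist"
  by unfold_locales (auto simp: seqdist_nonneg seqdist_commute seqdist_zero seqdist_triangle)

lemma real_small: "(e::real) > 0 \<Longrightarrow> \<exists>m. 1 / (real m + 1) < e"
  by (metis reals_Archimedean of_nat_Suc add.commute inverse_eq_divide)

lemma openin_KGtop:
  "openin (KGtop K G) U \<longleftrightarrow> U \<subseteq> KG K G \<and>
     (\<forall>x\<in>U. \<exists>m. \<forall>t\<in>KG K G. (\<forall>i<m. t i = x i) \<longrightarrow> t \<in> U)"
proof -
  interpret M: Metric_space "KG K G" seqdist by (rule Metric_space_seqdist)
  show ?thesis unfolding KGtop_def M.openin_mtopology
  proof safe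
    fix x assume U: "U \<subseteq> KG K G" and H: "\<forall>x. x \<in> U \<longrightarrow> (\<exists>r>0. M.mball x r \<subseteq> U)" and x: "x \<in> U"
    then obtain r where r: "r > 0" "M.mball x r \<subseteq> U" by blast
    obtain m where m: "1 / (real m + 1) < r" using real_small[OF r(1)] by blast
    show "\<exists>m. \<forall>t\<in>KG K G. (\<forall>i<m. t i = x i) \<longrightarrow> t \<in> U"
    proof (intro exI ballI impI)
      fix t assume t: "t \<in> KG K G" "\<forall>i<m. t i = x i"
      then have "seqdist x t \<le> 1 / (real m + 1)" by (simp add: seqdist_le)
      then show "t \<in> U" using r m t x U unfolding M.mball_def by auto
    qed
  next
    fix x assume U: "U \<subseteq> KG K G" and H: "\<forall>x\<in>U. \<exists>m. \<forall>t\<in>KG K G. (\<forall>i<m. t i = x i) \<longrightarrow> t \<in> U" and x: "x \<in> U"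
    then obtain m where m: "\<forall>t\<in>KG K G. (\<forall>i<m. t i = x i) \<longrightarrow> t \<in> U" by blast
    show "\<exists>r>0. M.mball x r \<subseteq> U"
    proof (intro exI conjI)
      show "(0::real) < 1 / (real m + 1)" by simp
      show "M.mball x (1 / (real m + 1)) \<subseteq> U"
      proof
        fix t assume "t \<in> M.mball x (1 / (real m + 1))"
        then have "t \<in> KG K G" "seqdist x t < 1 / (real m + 1)" unfolding M.mball_def by auto
        then show "t \<in> U" using m seqdist_less[of x t m] by auto
      qed
    qed
  qed
qed

lemma topspace_KGtop: "topspace (KGtop K G) = KG K G"
proof -
  interpret M: Metric_space "KG K G" seqdist by (rule Metric_space_seqdist)
  show ?thesis unfolding KGtop_def by simp
qed




lemma shift_pow: "(shift ^^ n) s = (\<lambda>i. s (i + n))"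
  by (induction n arbitrary: s) (auto simp: shift_def)

definition conc :: "nat \<Rightarrow> (nat \<Rightarrow> 'a) \<Rightarrow> (nat \<Rightarrow> 'a) \<Rightarrow> nat \<Rightarrow> 'a" where
  "conc n w y = (\<lambda>i. if i < n then w i else y (i - n))"

lemma conc_shift: "(shift ^^ n) (conc n w y) = y"
  by (simp add: shift_pow conc_def)

lemma conc_lt: "i < n \<Longrightarrow> conc n w y i = w i"
  by (simp add: conc_def)

locale sft =
  fixes K :: "'a set" and G :: "('a \<times> 'a) set"
  assumes finK: "finite K" and GK: "G \<subseteq> K \<times> K" and domG: "Domain G = K"
begin

lemma OG_eq: "OG G = G\<^sup>+"
proof (rule set_eqI)
  fix p
  have "p \<in> OG G \<longleftrightarrow> (\<exists>n\<ge>1. p \<in> G ^^ n)" by (auto simp: OG_def)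
  also have "\<dots> \<longleftrightarrow> (\<exists>n>0. p \<in> G ^^ n)" by (auto simp: Suc_le_eq One_nat_def)
  also have "\<dots> \<longleftrightarrow> p \<in> G\<^sup>+" by (rule trancl_power[symmetric])
  finally show "p \<in> OG G \<longleftrightarrow> p \<in> G\<^sup>+" .
qed

lemma trancl_K: "(a,b) \<in> G\<^sup>+ \<Longrightarrow> a \<in> K \<and> b \<in> K"
  using trancl_subset_Sigma[OF GK] by auto

lemma G_K: "(a,b) \<in> G \<Longrightarrow> a \<in> K \<and> b \<in> K"
  using GK by auto

lemma succ: "a \<in> K \<Longrightarrow> \<exists>b. (a,b) \<in> G" using domG by auto

lemma KG_edge: "s \<in> KG K G \<Longrightarrow> (s i, s (Suc i)) \<in> G" by (simp add: KG_def)
lemma KG_K: "s \<in> KG K G \<Longrightarrow> s i \<in> K" by (simp add: KG_def)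

lemma KG_trancl: "s \<in> KG K G \<Longrightarrow> i < j \<Longrightarrow> (s i, s j) \<in> G\<^sup>+"
proof (induction j)
  case 0 then show ?case by simp
next
  case (Suc j)
  show ?case
  proof (cases "i = j")
    case True then show ?thesis using KG_edge[OF Suc.prems(1)] by auto
  next
    case False
    then have "(s i, s j) \<in> G\<^sup>+" using Suc by auto
    then show ?thesis using KG_edge[OF Suc.prems(1), of j] by (rule trancl_into_trancl)
  qed
qed

lemma KG_rtrancl: "s \<in> KG K G \<Longrightarrow> i \<le> j \<Longrightarrow> (s i, s j) \<in> G\<^sup>*"
  using KG_trancl[of s i j] by (cases "i = j") auto

lemma shift_KG: "s \<in> KG K G \<Longrightarrow> (shift ^^ n) s \<in> KG K G"
  by (simp add: KG_def shift_pow)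

lemma subG_iff: "s \<in> subG K G A \<longleftrightarrow> s \<in> KG K G \<and> (\<forall>i. s i \<in> A)"
  by (simp add: subG_def)

lemma trancl_path: "(a,b) \<in> G\<^sup>+ \<Longrightarrow> \<exists>n\<ge>1. \<exists>w. w 0 = a \<and> w n = b \<and> (\<forall>i<n. (w i, w (Suc i)) \<in> G)"
  by (auto simp: trancl_power relpow_fun_conv Suc_le_eq)

lemma ext_KG: assumes a: "a \<in> K" shows "\<exists>y\<in>KG K G. y 0 = a"
proof -
  define nxt where "nxt = (\<lambda>a. SOME b. (a,b) \<in> G)"
  have nx: "b \<in> K \<Longrightarrow> (b, nxt b) \<in> G" for b
    unfolding nxt_def using succ by (metis someI_ex)
  define y where "y = (\<lambda>n. (nxt ^^ n) a)"
  have yK: "y n \<in> K" for n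
  proof (induction n)
    case 0 then show ?case using a by (simp add: y_def)
  next
    case (Suc n) then show ?case using nx[of "y n"] G_K by (auto simp: y_def)
  qed
  have "y \<in> KG K G" unfolding KG_def using yK nx by (auto simp: y_def)
  then show ?thesis by (intro bexI[of _ y]) (auto simp: y_def)
qed

lemma conc_KG:
  assumes w: "\<forall>i<n. (w i, w (Suc i)) \<in> G" and wy: "w n = y 0" and y: "y \<in> KG K G"
  shows "conc n w y \<in> KG K G"
  unfolding KG_def
proof (intro CollectI conjI allI)
  fix i
  show "conc n w y i \<in> K"
    using w G_K KG_K[OF y] by (cases "i < n") (auto simp: conc_def)
  show "(conc n w y i, conc n w y (Suc i)) \<in> G"
  proof -
    consider "Suc i < n" | "Suc i = n" | "i \<ge> n" by linarith
    then show ?thesis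
    proof cases
      case 1 then show ?thesis using w by (simp add: conc_def)
    next
      case 2 then show ?thesis using w wy by (auto simp: conc_def)
    next
      case 3
      then have "Suc i - n = Suc (i - n)" by simp
      then show ?thesis using 3 KG_edge[OF y, of "i - n"] by (simp add: conc_def)
    qed
  qed
qed

lemma prefix_path:
  assumes x: "x \<in> KG K G" and xu: "(x m, u) \<in> G\<^sup>+" and y: "y \<in> KG K G" and y0: "y 0 = u"
  shows "\<exists>t\<in>KG K G. \<exists>n>m. (\<forall>i\<le>m. t i = x i) \<and> (shift ^^ n) t = y"
proof -
  obtain l w where l: "l \<ge> 1" "w 0 = x m" "w l = u" "\<forall>i<l. (w i, w (Suc i)) \<in> G"
    using trancl_path[OF xu] by blast
  define w' where "w' = (\<lambda>i. if i \<le> m then x i else w (i - m))"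
  have e: "\<forall>i<m+l. (w' i, w' (Suc i)) \<in> G"
  proof (intro allI impI)
    fix i assume i: "i < m + l"
    consider "i < m" | "i = m" | "i > m" by linarith
    then show "(w' i, w' (Suc i)) \<in> G"
    proof cases
      case 1 then show ?thesis using KG_edge[OF x, of i] by (simp add: w'_def)
    next
      case 2 then show ?thesis using l by (auto simp: w'_def)
    next
      case 3
      then have "Suc i - m = Suc (i - m)" "i - m < l" using i by auto
      then show ?thesis using 3 l(4) by (simp add: w'_def)
    qed
  qed
  have "w' (m + l) = y 0" using l y0 by (simp add: w'_def)
  then have t: "conc (m + l) w' y \<in> KG K G" using conc_KG[OF e _ y] by simp
  show ?thesis
  proof (intro bexI exI conjI allI impI)
    show "m < m + l" using l by simp
    fix i assume "i \<le> m"
    then show "conc (m + l) w' y i = x i" using l by (simp add: conc_def w'_def)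
  qed (use t conc_shift in auto)
qed

definition cls :: "'a \<Rightarrow> 'a set" where
  "cls b = {t. (t,t) \<in> G\<^sup>+ \<and> (b,t) \<in> G\<^sup>+ \<and> (t,b) \<in> G\<^sup>+}"

lemma basic_iff: "G_basic G B \<longleftrightarrow> (\<exists>s. (s,s) \<in> G\<^sup>+ \<and> B = cls s)"
  unfolding G_basic_def OG_eq cls_def ..

lemma terminal_iff: "G_terminal G B \<longleftrightarrow> G_basic G B \<and> G\<^sup>+ `` B \<subseteq> B"
  unfolding G_terminal_def OG_eq ..

lemma cls_self: "(b,b) \<in> G\<^sup>+ \<Longrightarrow> b \<in> cls b"
  by (simp add: cls_def)

lemma cls_eq: "c \<in> cls b \<Longrightarrow> cls c = cls b"
  unfolding cls_def by (auto intro: trancl_trans)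

lemma basic_cls: "G_basic G B \<Longrightarrow> b \<in> B \<Longrightarrow> B = cls b"
  unfolding basic_iff using cls_eq by metis

lemma basic_inter: "G_basic G B \<Longrightarrow> G_basic G B' \<Longrightarrow> b \<in> B \<Longrightarrow> b \<in> B' \<Longrightarrow> B = B'"
  using basic_cls by metis

lemma basic_ne: "G_basic G B \<Longrightarrow> \<exists>b. b \<in> B"
  unfolding basic_iff using cls_self by blast

lemma basic_K: "G_basic G B \<Longrightarrow> B \<subseteq> K"
  unfolding basic_iff cls_def using trancl_K by blast

lemma basic_self: "G_basic G B \<Longrightarrow> b \<in> B \<Longrightarrow> (b,b) \<in> G\<^sup>+"
  using basic_cls cls_def by blast

lemma basic_reach: "G_basic G B \<Longrightarrow> b \<in> B \<Longrightarrow> c \<in> B \<Longrightarrow> (b,c) \<in> G\<^sup>+"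
  using basic_cls[of B b] unfolding cls_def by blast

lemma basic_mutual: "G_basic G B \<Longrightarrow> b \<in> B \<Longrightarrow> (b,c) \<in> G\<^sup>+ \<Longrightarrow> (c,b) \<in> G\<^sup>+ \<Longrightarrow> c \<in> B"
  using basic_cls[of B b] unfolding cls_def by (auto intro: trancl_trans)

lemma basic_mid:
  assumes B: "G_basic G B" and b: "b \<in> B" and c: "c \<in> B" and bt: "(b,t) \<in> G\<^sup>*" and tc: "(t,c) \<in> G\<^sup>*"
  shows "t \<in> B"
proof -
  have cb: "(c,b) \<in> G\<^sup>+" by (rule basic_reach[OF B c b])
  have bb: "(b,b) \<in> G\<^sup>+" by (rule basic_self[OF B b])
  have "(b,t) \<in> G\<^sup>+" using bb bt by (rule trancl_rtrancl_trancl)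
  moreover have "(t,b) \<in> G\<^sup>+" using tc cb by (rule rtrancl_trancl_trancl)
  ultimately show ?thesis using basic_mutual[OF B b] by blast
qed

lemma seq_mid:
  assumes B: "G_basic G B" and t: "t \<in> KG K G" and "t m \<in> B" "t n \<in> B" "m \<le> i" "i \<le> n"
  shows "t i \<in> B"
  using basic_mid[OF B, of "t m" "t n" "t i"] KG_rtrancl[OF t] assms by auto

lemma periodic:
  assumes B: "G_basic G B" and u: "u \<in> B"
  shows "\<exists>p\<in>subG K G B. p 0 = u \<and> (\<exists>q\<ge>1. (shift ^^ q) p = p)"
proof -
  have "(u,u) \<in> G\<^sup>+" by (rule basic_self[OF B u])
  then obtain q w where q: "q \<ge> 1" "w 0 = u" "w q = u" "\<forall>i<q. (w i, w (Suc i)) \<in> G"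
    using trancl_path by blast
  define p where "p = (\<lambda>i. w (i mod q))"
  have edge: "(p i, p (Suc i)) \<in> G" for i
  proof (cases "Suc (i mod q) = q")
    case True
    then have "Suc i mod q = 0" by (simp add: mod_Suc)
    moreover have "(w (i mod q), w (Suc (i mod q))) \<in> G" using q(1,4) by simp
    ultimately show ?thesis using True q by (simp add: p_def)
  next
    case False
    then have "Suc i mod q = Suc (i mod q)" by (simp add: mod_Suc)
    moreover have "(w (i mod q), w (Suc (i mod q))) \<in> G" using q(1,4) by simp
    ultimately show ?thesis by (simp add: p_def)
  qed
  have pKG: "p \<in> KG K G" unfolding KG_def using edge G_K by blast
  have p0: "p 0 = u" using q by (simp add: p_def)
  have pq: "p (q * Suc i) = u" for i using q by (simp add: p_def)
  have "p i \<in> B" for i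
  proof -
    have "1 * Suc i \<le> q * Suc i" using q by (intro mult_le_mono1) simp
    then have "i \<le> q * Suc i" by simp
    then show ?thesis using seq_mid[OF B pKG, of 0 "q * Suc i" i] p0 pq u by simp
  qed
  then have "p \<in> subG K G B" using pKG by (simp add: subG_iff)
  moreover have "(shift ^^ q) p = p" by (simp add: shift_pow p_def)
  ultimately show ?thesis using p0 q by blast
qed

lemma to_terminal:
  assumes a: "a \<in> K"
  shows "\<exists>B u. G_terminal G B \<and> u \<in> B \<and> (a,u) \<in> G\<^sup>+"
proof -
  define f where "f = (\<lambda>t. card (G\<^sup>+ `` {t}))"
  obtain a1 where "(a,a1) \<in> G" using succ[OF a] by blast
  then have "(a,a1) \<in> G\<^sup>+" by simp
  then obtain t where t: "(a,t) \<in> G\<^sup>+" and tmin: "\<forall>t'. (a,t') \<in> G\<^sup>+ \<longrightarrow> f t \<le> f t'"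
    using ex_has_least_nat[of "\<lambda>t. (a,t) \<in> G\<^sup>+" a1 f] by blast
  have finR: "finite (G\<^sup>+ `` {x})" for x
    by (rule finite_subset[OF _ finK]) (use trancl_K in auto)
  have same: "G\<^sup>+ `` {v} = G\<^sup>+ `` {t}" if tv: "(t,v) \<in> G\<^sup>+" for v
  proof -
    have sub: "G\<^sup>+ `` {v} \<subseteq> G\<^sup>+ `` {t}" using tv by (auto intro: trancl_trans)
    have "(a,v) \<in> G\<^sup>+" using t tv by (rule trancl_trans)
    then have "f t \<le> f v" using tmin by blast
    then show ?thesis using card_subset_eq[OF finR sub] sub card_mono[OF finR sub]
      unfolding f_def by linarith
  qed
  obtain u where tu: "(t,u) \<in> G" using succ trancl_K[OF t] by blast
  then have tu': "(t,u) \<in> G\<^sup>+" by simp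
  have uu: "(u,u) \<in> G\<^sup>+" using same[OF tu'] tu' by blast
  have bk: "(v,u) \<in> G\<^sup>+" if "(u,v) \<in> G\<^sup>+" for v
  proof -
    have "(t,v) \<in> G\<^sup>+" using tu' that by (rule trancl_trans)
    then show ?thesis using same tu' by blast
  qed
  define B where "B = cls u"
  have Bb: "G_basic G B" unfolding basic_iff B_def using uu by blast
  have "G\<^sup>+ `` B \<subseteq> B"
  proof
    fix c assume "c \<in> G\<^sup>+ `` B"
    then obtain b where b: "b \<in> B" "(b,c) \<in> G\<^sup>+" by blast
    have uc: "(u,c) \<in> G\<^sup>+" using b unfolding B_def cls_def by (auto intro: trancl_trans)
    have cu: "(c,u) \<in> G\<^sup>+" by (rule bk[OF uc])
    show "c \<in> B" unfolding B_def cls_def using uc cu by (auto intro: trancl_trans)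
  qed
  then have "G_terminal G B" using Bb terminal_iff by blast
  moreover have "u \<in> B" unfolding B_def by (rule cls_self[OF uu])
  moreover have "(a,u) \<in> G\<^sup>+" using t tu' by (rule trancl_trans)
  ultimately show ?thesis by blast
qed

end



context sft begin

definition ev :: "(nat \<Rightarrow> 'a) \<Rightarrow> 'a set \<Rightarrow> bool" where
  "ev s B \<longleftrightarrow> (\<exists>k. \<forall>i\<ge>k. s i \<in> B)"

lemma end_ex:
  assumes s: "s \<in> KG K G"
  shows "\<exists>B. G_basic G B \<and> ev s B"
proof -
  define R where "R = {a \<in> K. infinite {i. s i = a}}"
  have eq: "{i. s i \<notin> R} = (\<Union>a\<in>K - R. {i. s i = a})" using KG_K[OF s] by (auto simp: R_def)
  have "finite (\<Union>a\<in>K - R. {i. s i = a})" using finK by (auto simp: R_def)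
  then have fin: "finite {i. s i \<notin> R}" using eq by simp
  then obtain k where k: "{i. s i \<notin> R} \<subseteq> {..<k}" using finite_nat_bounded by blast
  have kR: "\<forall>i\<ge>k. s i \<in> R" using k by force
  have Rr: "(a,b) \<in> G\<^sup>+" if a: "a \<in> R" and b: "b \<in> R" for a b
  proof -
    have "infinite {i. s i = a}" using a by (simp add: R_def)
    then have "{i. s i = a} \<noteq> {}" by (metis finite.emptyI)
    then obtain j where j: "s j = a" by blast
    have "infinite {i. s i = b}" using b by (simp add: R_def)
    then obtain i where i: "i > j" "s i = b" by (auto simp: infinite_nat_iff_unbounded)
    show ?thesis using KG_trancl[OF s i(1)] i j by simp
  qed
  define a0 where "a0 = s k"
  have a0: "a0 \<in> R" using kR by (simp add: a0_def)
  define B where "B = cls a0"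
  have "G_basic G B" unfolding basic_iff B_def using Rr[OF a0 a0] by blast
  moreover have "ev s B" unfolding ev_def
  proof (intro exI allI impI)
    fix i assume "i \<ge> k"
    then have si: "s i \<in> R" using kR by blast
    show "s i \<in> B" unfolding B_def cls_def using Rr[OF si si] Rr[OF a0 si] Rr[OF si a0] by blast
  qed
  ultimately show ?thesis by blast
qed

lemma end_unique:
  assumes "G_basic G B" "G_basic G B'" "ev s B" "ev s B'" shows "B = B'"
proof -
  obtain k k' where k: "\<forall>i\<ge>k. s i \<in> B" and k': "\<forall>i\<ge>k'. s i \<in> B'" using assms(3,4) unfolding ev_def by blast
  have "s (max k k') \<in> B" "s (max k k') \<in> B'" using k k' by auto
  then show ?thesis using basic_inter[OF assms(1,2)] by blast
qed

lemma P_iff: "s \<in> KG K G \<Longrightarrow>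
   (G_basic G B \<and> (\<exists>k. \<forall>i\<ge>k. s i \<in> B \<and> (shift ^^ i) s \<in> subG K G B)) \<longleftrightarrow> G_basic G B \<and> ev s B"
proof -
  assume s: "s \<in> KG K G"
  have "(\<exists>k. \<forall>i\<ge>k. s i \<in> B \<and> (shift ^^ i) s \<in> subG K G B) \<longleftrightarrow> ev s B"
  proof
    assume "\<exists>k. \<forall>i\<ge>k. s i \<in> B \<and> (shift ^^ i) s \<in> subG K G B"
    then show "ev s B" unfolding ev_def by blast
  next
    assume "ev s B"
    then obtain k where k: "\<forall>i\<ge>k. s i \<in> B" unfolding ev_def by blast
    have "s i \<in> B \<and> (shift ^^ i) s \<in> subG K G B" if "i \<ge> k" for i
      unfolding subG_iff shift_pow using k that shift_KG[OF s, of i] by (simp add: shift_pow)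
    then show "\<exists>k. \<forall>i\<ge>k. s i \<in> B \<and> (shift ^^ i) s \<in> subG K G B" by blast
  qed
  then show ?thesis by blast
qed

lemma End_ex1: "s \<in> KG K G \<Longrightarrow> \<exists>!B. G_basic G B \<and> (\<exists>k. \<forall>i\<ge>k. s i \<in> B \<and> (shift ^^ i) s \<in> subG K G B)"
proof -
  assume s: "s \<in> KG K G"
  obtain B where "G_basic G B" "ev s B" using end_ex[OF s] by blast
  note B = this
  show ?thesis
  proof (rule ex1I[of _ B])
    show "G_basic G B \<and> (\<exists>k. \<forall>i\<ge>k. s i \<in> B \<and> (shift ^^ i) s \<in> subG K G B)"
      using P_iff[OF s, of B, THEN iffD2] B by blast
    fix B' assume "G_basic G B' \<and> (\<exists>k. \<forall>i\<ge>k. s i \<in> B' \<and> (shift ^^ i) s \<in> subG K G B')"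
    then have "G_basic G B' \<and> ev s B'" by (rule P_iff[OF s, of B', THEN iffD1])
    then show "B' = B" using end_unique B by blast
  qed
qed

lemma EndS: "s \<in> KG K G \<Longrightarrow> G_basic G (EndS K G s) \<and> ev s (EndS K G s)"
  using theI'[OF End_ex1] P_iff unfolding EndS_def by blast

lemma EndS_eq: "s \<in> KG K G \<Longrightarrow> G_basic G B \<Longrightarrow> ev s B \<Longrightarrow> EndS K G s = B"
  using EndS end_unique by blast

lemma EndS_subG: "s \<in> subG K G B \<Longrightarrow> G_basic G B \<Longrightarrow> EndS K G s = B"
  by (rule EndS_eq) (auto simp: subG_iff ev_def)

lemma EndS_shift: "s \<in> KG K G \<Longrightarrow> EndS K G ((shift ^^ n) s) = EndS K G s"
proof -
  assume s: "s \<in> KG K G"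
  obtain k where k: "\<forall>i\<ge>k. s i \<in> EndS K G s" using EndS[OF s] unfolding ev_def by blast
  have "ev ((shift ^^ n) s) (EndS K G s)" unfolding ev_def shift_pow using k
    by (metis le_add1 order_trans)
  then show ?thesis using EndS_eq[OF shift_KG[OF s]] EndS[OF s] by blast
qed

lemma omega_sub: assumes s: "s \<in> KG K G" shows "omegaS K G s \<subseteq> subG K G (EndS K G s)"
proof
  fix y assume y: "y \<in> omegaS K G s"
  obtain k where k: "\<forall>i\<ge>k. s i \<in> EndS K G s" using EndS[OF s] unfolding ev_def by blast
  have "y j \<in> EndS K G s" for j
  proof -
    have "(0::real) < 1 / (real j + 1)" by simp
    then obtain n where n: "n \<ge> k" "seqdist ((shift ^^ n) s) y < 1 / (real j + 1)"
      using y unfolding omegaS_def by blast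
    then have "(shift ^^ n) s j = y j" using seqdist_less[of "(shift ^^ n) s" y j] by blast
    then have "y j = s (j + n)" by (simp add: shift_pow)
    then show ?thesis using k n by simp
  qed
  then show "y \<in> subG K G (EndS K G s)" using y by (simp add: subG_iff omegaS_def)
qed

lemma omega_periodic:
  assumes p: "p \<in> KG K G" and t: "(shift ^^ n) t = p" and q: "q \<ge> 1" "(shift ^^ q) p = p"
  shows "p \<in> omegaS K G t"
proof -
  have pj: "(shift ^^ (j * q)) p = p" for j
    by (induction j) (simp_all add: funpow_add q(2))
  have "\<exists>n'\<ge>N. seqdist ((shift ^^ n') t) p < e" if "e > 0" for e N
  proof (intro exI conjI)
    show "N \<le> N * q + n" using q by (metis le_add1 mult_le_mono2 mult_1_right order_trans)
    have "(shift ^^ (N * q + n)) t = p" using pj t by (simp add: funpow_add)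
    then show "seqdist ((shift ^^ (N * q + n)) t) p < e" using that by (simp add: seqdist_formula)
  qed
  then show ?thesis using p unfolding omegaS_def by blast
qed

lemma chain_suff:
  assumes x: "x \<in> KG K G" and y: "y \<in> KG K G"
    and H: "\<And>m. \<exists>z\<in>KG K G. \<exists>n\<ge>1. (\<forall>i<m. z i = x i) \<and> (shift ^^ n) z = y"
  shows "(x,y) \<in> chainS K G"
  unfolding chainS_def
proof (clarsimp simp: x y)
  fix e :: real assume e: "e > 0"
  obtain m where m: "1 / (real m + 1) < e" using real_small[OF e] by blast
  obtain z n where z: "z \<in> KG K G" "n \<ge> 1" "\<forall>i<Suc m. z i = x i" "(shift ^^ n) z = y"
    using H[of "Suc m"] by blast
  define c where "c = (\<lambda>i. if i = 0 then x else (shift ^^ i) z)"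
  show "\<exists>n\<ge>Suc 0. \<exists>c. c 0 = x \<and> c n = y \<and> (\<forall>i\<le>n. c i \<in> KG K G) \<and> (\<forall>i<n. seqdist (shift (c i)) (c (Suc i)) \<le> e)"
  proof (intro exI conjI allI impI)
    show "Suc 0 \<le> n" using z by simp
    show "c 0 = x" by (simp add: c_def)
    show "c n = y" using z by (simp add: c_def)
    fix i
    show "i \<le> n \<Longrightarrow> c i \<in> KG K G" using x shift_KG[OF z(1)] by (simp add: c_def)
    assume "i < n"
    show "seqdist (shift (c i)) (c (Suc i)) \<le> e"
    proof (cases "i = 0")
      case True
      have "seqdist (shift x) (shift z) \<le> 1 / (real m + 1)"
        unfolding seqdist_le using z(3) by (simp add: shift_def)
      then show ?thesis using True m by (simp add: c_def)
    next
      case False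
      then show ?thesis using e by (simp add: c_def seqdist_formula)
    qed
  qed
qed

lemma chain_nec:
  assumes xy: "(x,y) \<in> chainS K G"
  shows "\<exists>z\<in>KG K G. \<exists>n\<ge>1. (\<forall>i<m. z i = x i) \<and> (shift ^^ n) z = y"
proof -
  have "(0::real) < 1 / (real (Suc m) + 1)" by simp
  then obtain n c where n: "n \<ge> 1" and c: "c 0 = x" "c n = y" "\<forall>i\<le>n. c i \<in> KG K G"
    "\<forall>i<n. seqdist (shift (c i)) (c (Suc i)) \<le> 1 / (real (Suc m) + 1)"
    using xy unfolding chainS_def by blast
  have ag: "c (Suc i) j = c i (Suc j)" if "i < n" "j < Suc m" for i j
  proof -
    have "seqdist (shift (c i)) (c (Suc i)) \<le> 1 / (real (Suc m) + 1)" using c(4) that by blast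
    then have "\<forall>j<Suc m. shift (c i) j = c (Suc i) j" by (simp only: seqdist_le)
    then show ?thesis using that by (simp add: shift_def)
  qed
  have cl: "\<forall>j. i + j \<le> Suc m \<longrightarrow> c i j = x (i + j)" if "i \<le> n" for i
    using that
  proof (induction i)
    case 0 then show ?case using c by simp
  next
    case (Suc i)
    show ?case
    proof (intro allI impI)
      fix j assume j: "Suc i + j \<le> Suc m"
      have "c (Suc i) j = c i (Suc j)" using ag Suc.prems j by simp
      also have "\<dots> = x (i + Suc j)" using Suc j by simp
      finally show "c (Suc i) j = x (Suc i + j)" by simp
    qed
  qed
  define w where "w = (\<lambda>i. c i 0)"
  have we: "\<forall>i<n. (w i, w (Suc i)) \<in> G"
  proof (intro allI impI)
    fix i assume i: "i < n"
    have "(c i 0, c i (Suc 0)) \<in> G" using KG_edge c(3) i by simp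
    then show "(w i, w (Suc i)) \<in> G" using ag[OF i, of 0] by (simp add: w_def)
  qed
  have yK: "y \<in> KG K G" using c by auto
  have z: "conc n w y \<in> KG K G" using conc_KG[OF we _ yK] c by (simp add: w_def)
  show ?thesis
  proof (intro bexI exI conjI allI impI)
    show "1 \<le> n" by (rule n)
    show "(shift ^^ n) (conc n w y) = y" by (rule conc_shift)
    fix i assume i: "i < m"
    show "conc n w y i = x i"
    proof (cases "i < n")
      case True
      have "c i 0 = x (i + 0)" using i True by (intro cl[of i, rule_format]) auto
      then show ?thesis using True by (simp add: conc_def w_def)
    next
      case False
      then have "c n (i - n) = x (n + (i - n))" using cl[of n] i by simp
      then show ?thesis using False c by (simp add: conc_def)
    qed
  qed (rule z)
qed

lemma chainS_KG: "(x,y) \<in> chainS K G \<Longrightarrow> x \<in> KG K G \<and> y \<in> KG K G"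
  unfolding chainS_def by blast

lemma chain_paths:
  assumes x: "x \<in> KG K G" and y: "y \<in> KG K G" and H: "\<And>m. (x m, y 0) \<in> G\<^sup>+"
  shows "(x,y) \<in> chainS K G"
proof (rule chain_suff[OF x y])
  fix m
  obtain t n where "t \<in> KG K G" "n > m" "\<forall>i\<le>m. t i = x i" "(shift ^^ n) t = y"
    using prefix_path[OF x H[of m] y refl] by blast
  then show "\<exists>z\<in>KG K G. \<exists>n\<ge>1. (\<forall>i<m. z i = x i) \<and> (shift ^^ n) z = y"
    by (intro bexI[of _ t] exI[of _ n]) auto
qed

end



context sft begin

lemma BG_glue:
  assumes B: "G_basic G B" and t: "t \<in> KG K G" and pre: "\<forall>i\<le>m. t i \<in> B"
    and post: "(shift ^^ n) t \<in> subG K G B" and mn: "m \<le> n"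
  shows "t \<in> subG K G B"
proof -
  have tn: "t (i + n) \<in> B" for i using post by (simp add: subG_iff shift_pow)
  have "t i \<in> B" for i
  proof -
    consider "i \<le> m" | "m \<le> i \<and> i \<le> n" | "n \<le> i" by linarith
    then show ?thesis
    proof cases
      case 1 then show ?thesis using pre by blast
    next
      case 2 then show ?thesis using seq_mid[OF B t, of m n i] pre tn[of 0] by simp
    next
      case 3 then show ?thesis using tn[of "i - n"] by simp
    qed
  qed
  then show ?thesis using t by (simp add: subG_iff)
qed

lemma BG_ne: "G_basic G B \<Longrightarrow> \<exists>x. x \<in> subG K G B"
  using basic_ne periodic by blast

lemma BG_class:
  assumes B: "G_basic G B" and x: "x \<in> subG K G B"
  shows "{y. (y,y) \<in> chainS K G \<and> (x,y) \<in> chainS K G \<and> (y,x) \<in> chainS K G} = subG K G B"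
proof (intro set_eqI iffI)
  have cc: "(a,b) \<in> chainS K G" if "a \<in> subG K G B" "b \<in> subG K G B" for a b
    using chain_paths[of a b] basic_reach[OF B] that by (simp add: subG_iff)
  fix y
  { assume "y \<in> subG K G B" then show "y \<in> {y. (y,y) \<in> chainS K G \<and> (x,y) \<in> chainS K G \<and> (y,x) \<in> chainS K G}"
      using cc x by blast }
  assume "y \<in> {y. (y,y) \<in> chainS K G \<and> (x,y) \<in> chainS K G \<and> (y,x) \<in> chainS K G}"
  then have xy: "(x,y) \<in> chainS K G" and yx: "(y,x) \<in> chainS K G" by auto
  have yK: "y \<in> KG K G" using chainS_KG[OF xy] by blast
  have xB: "x i \<in> B" for i using x by (simp add: subG_iff)
  have "y j \<in> B" for j
  proof -
    obtain z n where z: "z \<in> KG K G" "n \<ge> 1" "\<forall>i<1. z i = x i" "(shift ^^ n) z = y"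
      using chain_nec[OF xy, of 1] by blast
    have "(z 0, z (j + n)) \<in> G\<^sup>+" using KG_trancl[OF z(1)] z(2) by simp
    moreover have "z (j + n) = y j" using fun_cong[OF z(4), of j] by (simp add: shift_pow)
    ultimately have x0y: "(x 0, y j) \<in> G\<^sup>+" using z(3) by simp
    obtain z' n' where z': "z' \<in> KG K G" "n' \<ge> 1" "\<forall>i<Suc j. z' i = y i" "(shift ^^ n') z' = x"
      using chain_nec[OF yx, of "Suc j"] by blast
    have z'x: "z' (i + n') = x i" for i using fun_cong[OF z'(4), of i] by (simp add: shift_pow)
    show ?thesis
    proof (cases "j < n'")
      case True
      have "(z' j, z' n') \<in> G\<^sup>+" using KG_trancl[OF z'(1) True] .
      then have "(y j, x 0) \<in> G\<^sup>+" using z'(3) z'x[of 0] by simp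
      then show ?thesis using basic_mutual[OF B xB[of 0] x0y] by blast
    next
      case False
      then have "y j = x (j - n')" using z'(3) z'x[of "j - n'"] by simp
      then show ?thesis using xB by simp
    qed
  qed
  then show "y \<in> subG K G B" using yK by (simp add: subG_iff)
qed

lemma S_basic_BG: assumes B: "G_basic G B" shows "S_basic K G (subG K G B)"
proof -
  obtain x where x: "x \<in> subG K G B" using BG_ne[OF B] by blast
  have cl: "{y. (y,y) \<in> chainS K G \<and> (x,y) \<in> chainS K G \<and> (y,x) \<in> chainS K G} = subG K G B"
    by (rule BG_class[OF B x])
  then have "(x,x) \<in> chainS K G" using x by blast
  then show ?thesis unfolding S_basic_def using cl by blast
qed

lemma BG_trans: assumes B: "G_basic G B" shows "top_transitive K G (subG K G B)"
  unfolding top_transitive_def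
proof (intro conjI allI impI)
  show "shift ` subG K G B \<subseteq> subG K G B" by (auto simp: subG_iff KG_def shift_def)
  fix U V
  assume U: "openin (subtopology (KGtop K G) (subG K G B)) U"
    and V: "openin (subtopology (KGtop K G) (subG K G B)) V" and "U \<noteq> {}" "V \<noteq> {}"
  then obtain x y where x: "x \<in> U" and y: "y \<in> V" by blast
  obtain T where T: "openin (KGtop K G) T" "U = T \<inter> subG K G B" using U openin_subtopology by metis
  obtain T' where T': "V = T' \<inter> subG K G B" using V openin_subtopology by metis
  have xB: "x \<in> subG K G B" and xT: "x \<in> T" using x T by auto
  have yB: "y \<in> subG K G B" using y T' by auto
  obtain m where m: "\<forall>t\<in>KG K G. (\<forall>i<m. t i = x i) \<longrightarrow> t \<in> T" using T(1) xT openin_KGtop by metis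
  have xK: "x \<in> KG K G" and yK: "y \<in> KG K G" using xB yB by (auto simp: subG_iff)
  have "(x m, y 0) \<in> G\<^sup>+" using basic_reach[OF B] xB yB by (simp add: subG_iff)
  then obtain t n where t: "t \<in> KG K G" "n > m" "\<forall>i\<le>m. t i = x i" "(shift ^^ n) t = y"
    using prefix_path[OF xK _ yK refl] by blast
  have "t \<in> subG K G B" using BG_glue[OF B t(1), of m n] t xB yB by (simp add: subG_iff)
  moreover have "t \<in> T" using m t by auto
  ultimately have "t \<in> U" using T by blast
  then have "y \<in> (shift ^^ n) ` U \<inter> V" using t(4) y by blast
  then show "\<exists>n\<ge>1. (shift ^^ n) ` U \<inter> V \<noteq> {}" using t(2) by (intro exI[of _ n]) auto
qed

lemma BG_bij: "bij_betw (subG K G) {B. G_basic G B} {C. S_basic K G C}"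
  unfolding bij_betw_def
proof (intro conjI)
  show "inj_on (subG K G) {B. G_basic G B}"
  proof (rule inj_onI)
    fix B B' assume B: "B \<in> {B. G_basic G B}" and B': "B' \<in> {B. G_basic G B}" and eq: "subG K G B = subG K G B'"
    obtain x where x: "x \<in> subG K G B" using BG_ne B by blast
    have "x 0 \<in> B" using x by (simp add: subG_iff)
    moreover have "x 0 \<in> B'" using x eq by (simp add: subG_iff)
    ultimately show "B = B'" using basic_inter B B' by blast
  qed
  show "subG K G ` {B. G_basic G B} = {C. S_basic K G C}"
  proof (intro set_eqI iffI)
    fix C assume "C \<in> subG K G ` {B. G_basic G B}"
    then show "C \<in> {C. S_basic K G C}" using S_basic_BG by blast
  next
    fix C assume "C \<in> {C. S_basic K G C}"
    then obtain x where xx: "(x,x) \<in> chainS K G" and C: "C = {y. (y,y) \<in> chainS K G \<and> (x,y) \<in> chainS K G \<and> (y,x) \<in> chainS K G}"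
      unfolding S_basic_def by blast
    have xK: "x \<in> KG K G" using chainS_KG[OF xx] by blast
    have bk: "(x j, x 0) \<in> G\<^sup>+" for j
    proof (induction j rule: less_induct)
      case (less j)
      obtain z n where z: "z \<in> KG K G" "n \<ge> 1" "\<forall>i<Suc j. z i = x i" "(shift ^^ n) z = x"
        using chain_nec[OF xx, of "Suc j"] by blast
      have zx: "z (i + n) = x i" for i using fun_cong[OF z(4), of i] by (simp add: shift_pow)
      show ?case
      proof (cases "j < n")
        case True
        have "(z j, z n) \<in> G\<^sup>+" using KG_trancl[OF z(1) True] .
        then show ?thesis using z(3) zx[of 0] by simp
      next
        case False
        then have "x j = x (j - n)" using z(3) zx[of "j - n"] by simp
        moreover have "j - n < j" using False z(2) by simp
        ultimately show ?thesis using less by simp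
      qed
    qed
    define B where "B = cls (x 0)"
    have x00: "(x 0, x 0) \<in> G\<^sup>+" using bk[of 0] .
    have Bb: "G_basic G B" unfolding basic_iff B_def using x00 by blast
    have "x j \<in> B" for j
    proof -
      have fw: "(x 0, x j) \<in> G\<^sup>+" using x00 KG_trancl[OF xK, of 0 j] by (cases "j = 0") auto
      then have "(x j, x j) \<in> G\<^sup>+" using bk[of j] by (meson trancl_trans)
      then show ?thesis unfolding B_def cls_def using fw bk[of j] by blast
    qed
    then have "x \<in> subG K G B" using xK by (simp add: subG_iff)
    then have "C = subG K G B" using BG_class[OF Bb] C by blast
    then show "C \<in> subG K G ` {B. G_basic G B}" using Bb by blast
  qed
qed

lemma fwd: "G\<^sup>+ `` A \<subseteq> A \<Longrightarrow> s \<in> KG K G \<Longrightarrow> s k \<in> A \<Longrightarrow> k \<le> i \<Longrightarrow> s i \<in> A"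
  using KG_trancl[of s k i] by (cases "k = i") auto

lemma inv_iff:
  assumes A: "A \<subseteq> K"
  shows "(G\<^sup>+ `` A \<subseteq> A) \<longleftrightarrow> (\<forall>s\<in>KG K G. s \<in> subG K G A \<longleftrightarrow> s 0 \<in> A)"
proof
  assume inv: "G\<^sup>+ `` A \<subseteq> A"
  show "\<forall>s\<in>KG K G. s \<in> subG K G A \<longleftrightarrow> s 0 \<in> A"
    using fwd[OF inv] by (auto simp: subG_iff)
next
  assume H: "\<forall>s\<in>KG K G. s \<in> subG K G A \<longleftrightarrow> s 0 \<in> A"
  show "G\<^sup>+ `` A \<subseteq> A"
  proof
    fix b assume "b \<in> G\<^sup>+ `` A"
    then obtain a where a: "a \<in> A" "(a,b) \<in> G\<^sup>+" by blast
    obtain x where x: "x \<in> KG K G" "x 0 = a" using ext_KG trancl_K[OF a(2)] by blast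
    obtain y where y: "y \<in> KG K G" "y 0 = b" using ext_KG trancl_K[OF a(2)] by blast
    obtain t n where t: "t \<in> KG K G" "n > 0" "\<forall>i\<le>0. t i = x i" "(shift ^^ n) t = y"
      using prefix_path[OF x(1) _ y(1) y(2), of 0] a x by auto
    have "t \<in> subG K G A" using H t x a by auto
    then have "t (0 + n) \<in> A" by (simp add: subG_iff)
    then show "b \<in> A" using fun_cong[OF t(4), of 0] y by (simp add: shift_pow)
  qed
qed

lemma inv_chain:
  assumes inv: "G\<^sup>+ `` A \<subseteq> A"
  shows "chainS K G `` subG K G A \<subseteq> subG K G A"
proof
  fix y assume "y \<in> chainS K G `` subG K G A"
  then obtain x where x: "x \<in> subG K G A" and xy: "(x,y) \<in> chainS K G" by blast
  obtain z n where z: "z \<in> KG K G" "n \<ge> 1" "\<forall>i<1. z i = x i" "(shift ^^ n) z = y"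
    using chain_nec[OF xy, of 1] by blast
  have "z 0 \<in> A" using z x by (simp add: subG_iff)
  then have "z (i + n) \<in> A" for i using fwd[OF inv z(1), of 0 "i + n"] by simp
  then show "y \<in> subG K G A" using z shift_KG[OF z(1), of n] by (auto simp: subG_iff shift_pow)
qed

lemma inv_open:
  assumes inv: "G\<^sup>+ `` A \<subseteq> A"
  shows "openin (KGtop K G) (subG K G A)"
  unfolding openin_KGtop
proof (intro conjI ballI)
  show "subG K G A \<subseteq> KG K G" by (auto simp: subG_iff)
  fix x assume x: "x \<in> subG K G A"
  show "\<exists>m. \<forall>t\<in>KG K G. (\<forall>i<m. t i = x i) \<longrightarrow> t \<in> subG K G A"
  proof (intro exI[of _ 1] ballI impI)
    fix t assume t: "t \<in> KG K G" "\<forall>i<1. t i = x i"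
    then have "t 0 \<in> A" using x by (simp add: subG_iff)
    then have "t i \<in> A" for i using fwd[OF inv t(1), of 0 i] by simp
    then show "t \<in> subG K G A" using t by (simp add: subG_iff)
  qed
qed

lemma inv_closed:
  assumes A: "A \<subseteq> K" and inv: "G\<^sup>+ `` A \<subseteq> A"
  shows "closedin (KGtop K G) (subG K G A)"
  unfolding closedin_def topspace_KGtop openin_KGtop
proof (intro conjI ballI)
  show "subG K G A \<subseteq> KG K G" "KG K G - subG K G A \<subseteq> KG K G" by (auto simp: subG_iff)
  fix x assume x: "x \<in> KG K G - subG K G A"
  then have x0: "x 0 \<notin> A" using inv_iff[OF A] inv by blast
  show "\<exists>m. \<forall>t\<in>KG K G. (\<forall>i<m. t i = x i) \<longrightarrow> t \<in> KG K G - subG K G A"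
  proof (intro exI[of _ 1] ballI impI)
    fix t assume t: "t \<in> KG K G" "\<forall>i<1. t i = x i"
    then have "t 0 \<notin> A" using x0 by simp
    then show "t \<in> KG K G - subG K G A" using t(1) by (force simp: subG_def)
  qed
qed

lemma inv_End_open:
  assumes inv: "G\<^sup>+ `` A \<subseteq> A"
  shows "openin (KGtop K G) {s \<in> KG K G. EndS K G s \<subseteq> A}"
  unfolding openin_KGtop
proof (intro conjI ballI)
  show "{s \<in> KG K G. EndS K G s \<subseteq> A} \<subseteq> KG K G" by blast
  fix x assume x: "x \<in> {s \<in> KG K G. EndS K G s \<subseteq> A}"
  then have xK: "x \<in> KG K G" and xA: "EndS K G x \<subseteq> A" by auto
  obtain k where k: "\<forall>i\<ge>k. x i \<in> EndS K G x" using EndS[OF xK] unfolding ev_def by blast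
  show "\<exists>m. \<forall>t\<in>KG K G. (\<forall>i<m. t i = x i) \<longrightarrow> t \<in> {s \<in> KG K G. EndS K G s \<subseteq> A}"
  proof (intro exI[of _ "Suc k"] ballI impI)
    fix t assume t: "t \<in> KG K G" "\<forall>i<Suc k. t i = x i"
    then have tk: "t k \<in> A" using k xA by auto
    obtain k' where k': "\<forall>i\<ge>k'. t i \<in> EndS K G t" using EndS[OF t(1)] unfolding ev_def by blast
    have m1: "t (max k k') \<in> EndS K G t" using k' by simp
    have m2: "t (max k k') \<in> A" using fwd[OF inv t(1) tk] by simp
    have "EndS K G t \<subseteq> A"
    proof
      fix b assume "b \<in> EndS K G t"
      then have "(t (max k k'), b) \<in> G\<^sup>+" using basic_reach EndS[OF t(1)] m1 by blast
      then show "b \<in> A" using inv m2 by blast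
    qed
    then show "t \<in> {s \<in> KG K G. EndS K G s \<subseteq> A}" using t by blast
  qed
qed

lemma escape:
  assumes x: "x \<in> KG K G" and T: "G_terminal G B" and u: "u \<in> B" and xu: "(x m, u) \<in> G\<^sup>+"
  shows "\<exists>t\<in>KG K G. (\<forall>i\<le>m. t i = x i) \<and> EndS K G t = B \<and>
     (\<exists>n q p. p \<in> subG K G B \<and> (shift ^^ n) t = p \<and> q \<ge> 1 \<and> (shift ^^ q) p = p \<and> p \<in> omegaS K G t)"
proof -
  have B: "G_basic G B" using T terminal_iff by blast
  obtain p q where p: "p \<in> subG K G B" "p 0 = u" "q \<ge> 1" "(shift ^^ q) p = p"
    using periodic[OF B u] by blast
  have pK: "p \<in> KG K G" using p by (simp add: subG_iff)
  obtain t n where t: "t \<in> KG K G" "n > m" "\<forall>i\<le>m. t i = x i" "(shift ^^ n) t = p"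
    using prefix_path[OF x xu pK p(2)] by blast
  have "EndS K G t = B" using EndS_shift[OF t(1), of n] EndS_subG[OF p(1) B] t(4) by simp
  moreover have "p \<in> omegaS K G t" by (rule omega_periodic[OF pK t(4) p(3,4)])
  ultimately show ?thesis using t p by blast
qed

lemma part_d: "s \<in> K \<Longrightarrow> \<exists>x\<in>KG K G. x 0 = s \<and> G_terminal G (EndS K G x)"
proof -
  assume s: "s \<in> K"
  obtain B u where B: "G_terminal G B" "u \<in> B" "(s,u) \<in> G\<^sup>+" using to_terminal[OF s] by blast
  obtain x where x: "x \<in> KG K G" "x 0 = s" using ext_KG[OF s] by blast
  show ?thesis using escape[OF x(1) B(1,2), of 0] x B by auto
qed

end



context sft begin

lemma nonterm_c:
  assumes B: "G_basic G B" and nt: "\<not> G_terminal G B"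
  shows "\<exists>c. c \<notin> B \<and> c \<in> K \<and> (\<forall>b\<in>B. (b,c) \<in> G\<^sup>+)"
proof -
  obtain b c where bc: "b \<in> B" "(b,c) \<in> G\<^sup>+" "c \<notin> B" using nt B unfolding terminal_iff by blast
  have "\<forall>b'\<in>B. (b',c) \<in> G\<^sup>+" using basic_reach[OF B _ bc(1)] bc(2) by (meson trancl_trans)
  then show ?thesis using bc trancl_K by blast
qed

lemma esc2:
  assumes B: "G_basic G B" and nt: "\<not> G_terminal G B" and x: "x \<in> KG K G"
  shows "\<exists>t\<in>KG K G. (\<forall>i\<le>m. t i = x i) \<and> EndS K G t \<noteq> B \<and> G_terminal G (EndS K G t) \<and>
     (\<exists>n q p. p \<notin> subG K G B \<and> (shift ^^ n) t = p \<and> q \<ge> 1 \<and> (shift ^^ q) p = p \<and> p \<in> omegaS K G t)"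
proof -
  obtain B'' u where T: "G_terminal G B''" "u \<in> B''" "(x m, u) \<in> G\<^sup>+"
    using to_terminal[OF KG_K[OF x]] by blast
  have ne: "B'' \<noteq> B" using T nt by blast
  have B'': "G_basic G B''" using T terminal_iff by blast
  obtain t n q p where t: "t \<in> KG K G" "\<forall>i\<le>m. t i = x i" "EndS K G t = B''"
    "p \<in> subG K G B''" "(shift ^^ n) t = p" "q \<ge> 1" "(shift ^^ q) p = p" "p \<in> omegaS K G t"
    using escape[OF x T] by blast
  have "p \<notin> subG K G B"
  proof
    assume "p \<in> subG K G B"
    then have "p 0 \<in> B" "p 0 \<in> B''" using t(4) by (auto simp: subG_iff)
    then show False using basic_inter[OF B B''] ne by blast
  qed
  then show ?thesis using t ne T by blast
qed

lemma e1: assumes B: "G_basic G B" shows "G_terminal G B \<longleftrightarrow> S_terminal K G (subG K G B)"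
proof
  assume T: "G_terminal G B"
  then have inv: "G\<^sup>+ `` B \<subseteq> B" using terminal_iff by blast
  show "S_terminal K G (subG K G B)"
    unfolding S_terminal_def using S_basic_BG[OF B] inv_chain[OF inv] by blast
next
  assume S: "S_terminal K G (subG K G B)"
  show "G_terminal G B"
  proof (rule ccontr)
    assume nt: "\<not> G_terminal G B"
    obtain c where c: "c \<notin> B" "c \<in> K" "\<forall>b\<in>B. (b,c) \<in> G\<^sup>+" using nonterm_c[OF B nt] by blast
    obtain x where x: "x \<in> subG K G B" using BG_ne[OF B] by blast
    obtain y where y: "y \<in> KG K G" "y 0 = c" using ext_KG[OF c(2)] by blast
    have xK: "x \<in> KG K G" using x by (simp add: subG_iff)
    have "(x,y) \<in> chainS K G" by (rule chain_paths[OF xK y(1)]) (use c x y in \<open>auto simp: subG_iff\<close>)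
    then have "y \<in> subG K G B" using S x unfolding S_terminal_def by blast
    then have "y 0 \<in> B" by (simp add: subG_iff)
    then show False using y c by simp
  qed
qed

lemma e2: assumes B: "G_basic G B" shows "G_terminal G B \<longleftrightarrow> visible K G (subG K G B)"
proof
  assume T: "G_terminal G B"
  have inv: "G\<^sup>+ `` B \<subseteq> B" using T terminal_iff by blast
  have op: "openin (KGtop K G) (subG K G B)" by (rule inv_open[OF inv])
  have sub: "subG K G B \<subseteq> {s \<in> KG K G. omegaS K G s \<subseteq> subG K G B}"
  proof
    fix s assume s: "s \<in> subG K G B"
    have sK: "s \<in> KG K G" using s by (simp add: subG_iff)
    show "s \<in> {s \<in> KG K G. omegaS K G s \<subseteq> subG K G B}"
      using omega_sub[OF sK] EndS_subG[OF s B] sK by simp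
  qed
  have "subG K G B \<subseteq> basin K G (subG K G B)" unfolding basin_def by (rule interior_of_maximal[OF sub op])
  then show "visible K G (subG K G B)" using BG_ne[OF B] unfolding visible_def by blast
next
  assume V: "visible K G (subG K G B)"
  show "G_terminal G B"
  proof (rule ccontr)
    assume nt: "\<not> G_terminal G B"
    from V obtain x where "x \<in> basin K G (subG K G B)" unfolding visible_def by blast
    then obtain T where T: "openin (KGtop K G) T" "x \<in> T" "T \<subseteq> {s \<in> KG K G. omegaS K G s \<subseteq> subG K G B}"
      unfolding basin_def interior_of_def by blast
    have xK: "x \<in> KG K G" using T by blast
    obtain m where m: "\<forall>t\<in>KG K G. (\<forall>i<m. t i = x i) \<longrightarrow> t \<in> T" using T(1,2) openin_KGtop by metis
    obtain t n q p where t: "t \<in> KG K G" "\<forall>i\<le>m. t i = x i" "p \<notin> subG K G B" "p \<in> omegaS K G t"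
      using esc2[OF B nt xK, of m] by blast
    have "t \<in> T" using m t by auto
    then show False using T(3) t by blast
  qed
qed

lemma e3: assumes B: "G_basic G B"
  shows "G_terminal G B \<longleftrightarrow> (openin (KGtop K G) (subG K G B) \<and> closedin (KGtop K G) (subG K G B))"
proof
  assume T: "G_terminal G B"
  then have inv: "G\<^sup>+ `` B \<subseteq> B" using terminal_iff by blast
  show "openin (KGtop K G) (subG K G B) \<and> closedin (KGtop K G) (subG K G B)"
    using inv_open[OF inv] inv_closed[OF basic_K[OF B] inv] by blast
next
  assume "openin (KGtop K G) (subG K G B) \<and> closedin (KGtop K G) (subG K G B)"
  then have op: "openin (KGtop K G) (subG K G B)" by blast
  show "G_terminal G B"
  proof (rule ccontr)
    assume nt: "\<not> G_terminal G B"
    obtain x where x: "x \<in> subG K G B" using BG_ne[OF B] by blast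
    have xK: "x \<in> KG K G" using x by (simp add: subG_iff)
    obtain m where m: "\<forall>t\<in>KG K G. (\<forall>i<m. t i = x i) \<longrightarrow> t \<in> subG K G B" using op x openin_KGtop by metis
    obtain t where t: "t \<in> KG K G" "\<forall>i\<le>m. t i = x i" "EndS K G t \<noteq> B"
      using esc2[OF B nt xK, of m] by blast
    have "t \<in> subG K G B" using m t by auto
    then show False using EndS_subG[OF _ B] t by blast
  qed
qed

lemma shift_BG: assumes B: "G_basic G B" shows "shift ` subG K G B = subG K G B"
proof
  show "shift ` subG K G B \<subseteq> subG K G B" by (auto simp: subG_iff KG_def shift_def)
  show "subG K G B \<subseteq> shift ` subG K G B"
  proof
    fix y assume y: "y \<in> subG K G B"
    have yK: "y \<in> KG K G" and yB: "\<And>i. y i \<in> B" using y by (auto simp: subG_iff)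
    obtain b where b: "(y 0, b) \<in> G\<^sup>*" "(b, y 0) \<in> G" using tranclD2[OF basic_self[OF B yB[of 0]]] by blast
    have bB: "b \<in> B" using basic_mid[OF B yB[of 0] yB[of 0] b(1)] b(2) by blast
    define x where "x = (\<lambda>i. if i = 0 then b else y (i - 1))"
    have "x \<in> KG K G" unfolding KG_def
    proof (intro CollectI conjI allI)
      fix i
      show "x i \<in> K" using basic_K[OF B] bB yB by (auto simp: x_def)
      show "(x i, x (Suc i)) \<in> G"
      proof (cases i)
        case 0 then show ?thesis using b by (simp add: x_def)
      next
        case (Suc j) then show ?thesis using KG_edge[OF yK, of j] by (simp add: x_def)
      qed
    qed
    moreover have "\<forall>i. x i \<in> B" using bB yB by (simp add: x_def)
    ultimately have "x \<in> subG K G B" by (simp add: subG_iff)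
    moreover have "shift x = y" by (simp add: shift_def x_def)
    ultimately show "y \<in> shift ` subG K G B" by blast
  qed
qed

lemma shift_pow_BG: "G_basic G B \<Longrightarrow> (shift ^^ n) ` subG K G B = subG K G B"
proof (induction n)
  case 0 then show ?case by simp
next
  case (Suc n)
  have "(shift ^^ Suc n) ` subG K G B = shift ` ((shift ^^ n) ` subG K G B)" by (simp add: image_comp)
  then show ?case using Suc shift_BG by simp
qed

lemma e4: assumes B: "G_basic G B" shows "G_terminal G B \<longleftrightarrow> attractor K G (subG K G B)"
proof
  assume T: "G_terminal G B"
  have oc: "openin (KGtop K G) (subG K G B) \<and> closedin (KGtop K G) (subG K G B)"
    by (rule iffD1[OF e3[OF B] T])
  then have op: "openin (KGtop K G) (subG K G B)" and cl: "closedin (KGtop K G) (subG K G B)" by auto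
  show "attractor K G (subG K G B)" unfolding attractor_def
  proof (intro exI[of _ "subG K G B"] conjI)
    show "closedin (KGtop K G) (subG K G B)" by (rule cl)
    have "KGtop K G interior_of subG K G B = subG K G B" using op by (simp add: interior_of_eq)
    then show "shift ` subG K G B \<subseteq> KGtop K G interior_of subG K G B"
      using shift_BG[OF B] by simp
    have "\<And>n. (shift ^^ n) ` subG K G B = subG K G B" by (rule shift_pow_BG[OF B])
    then show "subG K G B = (\<Inter>n. (shift ^^ n) ` subG K G B)" by simp
  qed
next
  assume A: "attractor K G (subG K G B)"
  then obtain U where U: "closedin (KGtop K G) U" "shift ` U \<subseteq> KGtop K G interior_of U"
    and eq: "subG K G B = (\<Inter>n. (shift ^^ n) ` U)" unfolding attractor_def by blast
  show "G_terminal G B"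
  proof (rule ccontr)
    assume nt: "\<not> G_terminal G B"
    obtain x where x: "x \<in> subG K G B" using BG_ne[OF B] by blast
    have "x \<in> (\<Inter>n. (shift ^^ n) ` U)" using x eq by simp
    then have "x \<in> (shift ^^ 0) ` U" by (rule INT_D) simp
    then have xU: "x \<in> U" by simp
    have SU: "shift ` U \<subseteq> U" using U(2) interior_of_subset[of "KGtop K G" U] by (rule subset_trans)
    have "shift x \<in> shift ` U" using xU by (rule imageI)
    with U(2) have "shift x \<in> KGtop K G interior_of U" by (rule subsetD)
    then have "\<exists>T. openin (KGtop K G) T \<and> shift x \<in> T \<and> T \<subseteq> U" by (simp add: interior_of_def)
    then obtain T where T: "openin (KGtop K G) T" "shift x \<in> T" "T \<subseteq> U" by blast
    have x'K: "shift x \<in> KG K G" using x shift_KG[of x 1] by (simp add: subG_iff)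
    have "\<forall>y\<in>T. \<exists>m. \<forall>t\<in>KG K G. (\<forall>i<m. t i = y i) \<longrightarrow> t \<in> T"
      using T(1) by (simp add: openin_KGtop)
    then obtain m where m: "\<forall>t\<in>KG K G. (\<forall>i<m. t i = shift x i) \<longrightarrow> t \<in> T" using T(2) by blast
    from esc2[OF B nt x'K, of m] obtain t where t0: "t \<in> KG K G" "\<forall>i\<le>m. t i = shift x i"
      "\<exists>n q p. p \<notin> subG K G B \<and> (shift ^^ n) t = p \<and> q \<ge> 1 \<and> (shift ^^ q) p = p \<and> p \<in> omegaS K G t"
      by blast
    from t0(3) obtain n q p where t1: "p \<notin> subG K G B" "(shift ^^ n) t = p" "q \<ge> 1" "(shift ^^ q) p = p"
      by blast
    note t = t0(1,2) t1
    have "\<forall>i<m. t i = shift x i" using t(2) by simp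
    then have "t \<in> T" using m t(1) by blast
    then have tU: "t \<in> U" using T(3) by blast
    have allU: "(shift ^^ k) t \<in> U" for k
    proof (induction k)
      case 0 then show ?case using tU by simp
    next
      case (Suc k) then show ?case using SU by auto
    qed
    have pj: "(shift ^^ (j * q)) p = p" for j
    proof (induction j)
      case 0 then show ?case by simp
    next
      case (Suc j)
      have e: "Suc j * q = j * q + q" by simp
      have "(shift ^^ (Suc j * q)) p = (shift ^^ (j * q)) ((shift ^^ q) p)"
        unfolding e funpow_add by simp
      then show ?case using Suc t(6) by simp
    qed
    have "p \<in> (shift ^^ j) ` U" for j
    proof -
      have jq0: "j * 1 \<le> j * q" using t(5) by (intro mult_le_mono2)
      then have jq: "j \<le> j * q" by simp
      have "(shift ^^ j) ((shift ^^ (j * q + n - j)) t) = (shift ^^ (j + (j * q + n - j))) t"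
        by (simp only: funpow_add comp_apply)
      also have "j + (j * q + n - j) = j * q + n" using jq by arith
      also have "(shift ^^ (j * q + n)) t = (shift ^^ (j * q)) ((shift ^^ n) t)" by (simp only: funpow_add comp_apply)
      also have "\<dots> = p" using t(4) pj by simp
      finally have "(shift ^^ j) ((shift ^^ (j * q + n - j)) t) = p" .
      moreover have "(shift ^^ (j * q + n - j)) t \<in> U" by (rule allU)
      ultimately show ?thesis by (metis image_eqI)
    qed
    then have "p \<in> (\<Inter>n. (shift ^^ n) ` U)" by (rule INT_I)
    then have "p \<in> subG K G B" by (simp only: eq)
    then show False using t(3) by blast
  qed
qed

lemma e5: assumes B: "G_basic G B"
  shows "G_terminal G B \<longleftrightarrow> openin (KGtop K G) {s \<in> KG K G. EndS K G s = B}"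
proof
  assume T: "G_terminal G B"
  have inv: "G\<^sup>+ `` B \<subseteq> B" using T terminal_iff by blast
  have eqs: "{s \<in> KG K G. EndS K G s = B} = {s \<in> KG K G. EndS K G s \<subseteq> B}"
  proof (intro set_eqI iffI)
    fix s assume "s \<in> {s \<in> KG K G. EndS K G s \<subseteq> B}"
    then have s: "s \<in> KG K G" "EndS K G s \<subseteq> B" by auto
    have EB: "G_basic G (EndS K G s)" using EndS[OF s(1)] by blast
    obtain e where e: "e \<in> EndS K G s" using basic_ne[OF EB] by blast
    then have "e \<in> B" using s(2) by blast
    then have "EndS K G s = B" by (rule basic_inter[OF EB B e])
    then show "s \<in> {s \<in> KG K G. EndS K G s = B}" using s(1) by blast
  qed auto
  show "openin (KGtop K G) {s \<in> KG K G. EndS K G s = B}"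
    unfolding eqs by (rule inv_End_open[OF inv])
next
  assume op: "openin (KGtop K G) {s \<in> KG K G. EndS K G s = B}"
  show "G_terminal G B"
  proof (rule ccontr)
    assume nt: "\<not> G_terminal G B"
    obtain x where x: "x \<in> subG K G B" using BG_ne[OF B] by blast
    have xK: "x \<in> KG K G" using x by (simp add: subG_iff)
    have "x \<in> {s \<in> KG K G. EndS K G s = B}" using EndS_subG[OF x B] xK by simp
    moreover have "\<forall>y\<in>{s \<in> KG K G. EndS K G s = B}. \<exists>m. \<forall>t\<in>KG K G. (\<forall>i<m. t i = y i) \<longrightarrow> t \<in> {s \<in> KG K G. EndS K G s = B}"
      using op unfolding openin_KGtop by (elim conjE)
    ultimately obtain m where m: "\<forall>t\<in>KG K G. (\<forall>i<m. t i = x i) \<longrightarrow> t \<in> {s \<in> KG K G. EndS K G s = B}"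
      by blast
    obtain t where t: "t \<in> KG K G" "\<forall>i\<le>m. t i = x i" "EndS K G t \<noteq> B"
      using esc2[OF B nt xK, of m] by blast
    show False using m t by auto
  qed
qed

lemma f_open: "openin (KGtop K G) {s \<in> KG K G. G_terminal G (EndS K G s)}"
  unfolding openin_KGtop
proof (intro conjI ballI)
  show "{s \<in> KG K G. G_terminal G (EndS K G s)} \<subseteq> KG K G" by blast
  fix x assume x: "x \<in> {s \<in> KG K G. G_terminal G (EndS K G s)}"
  then have xK: "x \<in> KG K G" and T: "G_terminal G (EndS K G x)" by auto
  have B: "G_basic G (EndS K G x)" using EndS[OF xK] by blast
  have "openin (KGtop K G) {s \<in> KG K G. EndS K G s = EndS K G x}" using e5[OF B] T by blast
  then have "\<forall>y\<in>{s \<in> KG K G. EndS K G s = EndS K G x}. \<exists>m. \<forall>t\<in>KG K G. (\<forall>i<m. t i = y i) \<longrightarrow> t \<in> {s \<in> KG K G. EndS K G s = EndS K G x}"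
    unfolding openin_KGtop by (elim conjE)
  moreover have "x \<in> {s \<in> KG K G. EndS K G s = EndS K G x}" using xK by blast
  ultimately obtain m where m: "\<forall>t\<in>KG K G. (\<forall>i<m. t i = x i) \<longrightarrow> t \<in> {s \<in> KG K G. EndS K G s = EndS K G x}"
    by blast
  show "\<exists>m. \<forall>t\<in>KG K G. (\<forall>i<m. t i = x i) \<longrightarrow> t \<in> {s \<in> KG K G. G_terminal G (EndS K G s)}"
  proof (intro exI[of _ m] ballI impI)
    fix t assume "t \<in> KG K G" "\<forall>i<m. t i = x i"
    then have "t \<in> KG K G" "EndS K G t = EndS K G x" using m by auto
    then show "t \<in> {s \<in> KG K G. G_terminal G (EndS K G s)}" using T by simp
  qed
qed

lemma f_dense: "(KGtop K G) closure_of {s \<in> KG K G. G_terminal G (EndS K G s)} = KG K G"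
proof
  show "KGtop K G closure_of {s \<in> KG K G. G_terminal G (EndS K G s)} \<subseteq> KG K G"
    using closure_of_subset_topspace[of "KGtop K G"] by (simp add: topspace_KGtop)
  show "KG K G \<subseteq> KGtop K G closure_of {s \<in> KG K G. G_terminal G (EndS K G s)}"
  proof
    fix x assume xK: "x \<in> KG K G"
    show "x \<in> KGtop K G closure_of {s \<in> KG K G. G_terminal G (EndS K G s)}"
      unfolding in_closure_of topspace_KGtop
    proof (intro conjI allI impI)
      show "x \<in> KG K G" by (rule xK)
      fix T assume T: "x \<in> T \<and> openin (KGtop K G) T"
      then have "\<forall>y\<in>T. \<exists>m. \<forall>t\<in>KG K G. (\<forall>i<m. t i = y i) \<longrightarrow> t \<in> T"
        by (simp add: openin_KGtop)
      then obtain m where m: "\<forall>t\<in>KG K G. (\<forall>i<m. t i = x i) \<longrightarrow> t \<in> T" using T by blast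
      obtain B u where Bu: "G_terminal G B" "u \<in> B" "(x m, u) \<in> G\<^sup>+" using to_terminal[OF KG_K[OF xK]] by blast
      obtain t where t: "t \<in> KG K G" "\<forall>i\<le>m. t i = x i" "EndS K G t = B"
        using escape[OF xK Bu] by blast
      have "t \<in> T" using m t by auto
      then show "\<exists>y. y \<in> {s \<in> KG K G. G_terminal G (EndS K G s)} \<and> y \<in> T" using t Bu by blast
    qed
  qed
qed

end

theorem proposition3p1:
  fixes K :: "'a set" and G :: "('a \<times> 'a) set"
  assumes finK: "finite K"
    and GK: "G \<subseteq> K \<times> K"
    and domG: "Domain G = K"
  shows
    \<comment> \<open>(a)\<close>
    "(\<forall>s\<in>KG K G.
        (\<exists>!B. G_basic G B \<and> (\<exists>k. \<forall>i\<ge>k. s i \<in> B \<and> (shift ^^ i) s \<in> subG K G B)) \<and>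
        omegaS K G s \<subseteq> subG K G (EndS K G s))
   \<and> \<comment> \<open>(b)\<close>
     (\<forall>B. G_basic G B \<longrightarrow> S_basic K G (subG K G B) \<and> top_transitive K G (subG K G B))
   \<and> bij_betw (subG K G) {B. G_basic G B} {C. S_basic K G C}
   \<and> \<comment> \<open>(c)\<close>
     (\<forall>A. A \<subseteq> K \<longrightarrow>
        ((OG G `` A \<subseteq> A) \<longleftrightarrow> (\<forall>s\<in>KG K G. s \<in> subG K G A \<longleftrightarrow> s 0 \<in> A)) \<and>
        ((OG G `` A \<subseteq> A) \<longrightarrow>
            chainS K G `` subG K G A \<subseteq> subG K G A \<and>
            openin (KGtop K G) (subG K G A) \<and> closedin (KGtop K G) (subG K G A) \<and>
            openin (KGtop K G) {s \<in> KG K G. EndS K G s \<subseteq> A}))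
   \<and> \<comment> \<open>(d)\<close>
     (\<forall>s\<in>K. \<exists>x\<in>KG K G. x 0 = s \<and> G_terminal G (EndS K G x))
   \<and> \<comment> \<open>(e)\<close>
     (\<forall>B. G_basic G B \<longrightarrow>
        (G_terminal G B \<longleftrightarrow> S_terminal K G (subG K G B)) \<and>
        (G_terminal G B \<longleftrightarrow> visible K G (subG K G B)) \<and>
        (G_terminal G B \<longleftrightarrow> (openin (KGtop K G) (subG K G B) \<and> closedin (KGtop K G) (subG K G B))) \<and>
        (G_terminal G B \<longleftrightarrow> attractor K G (subG K G B)) \<and>
        (G_terminal G B \<longleftrightarrow> openin (KGtop K G) {s \<in> KG K G. EndS K G s = B}))
   \<and> \<comment> \<open>(f)\<close>
     (openin (KGtop K G) {s \<in> KG K G. G_terminal G (EndS K G s)} \<and>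
      (KGtop K G) closure_of {s \<in> KG K G. G_terminal G (EndS K G s)} = KG K G)"
proof -
  interpret sft K G using finK GK domG by unfold_locales
  have hA: "\<forall>s\<in>KG K G.
        (\<exists>!B. G_basic G B \<and> (\<exists>k. \<forall>i\<ge>k. s i \<in> B \<and> (shift ^^ i) s \<in> subG K G B)) \<and>
        omegaS K G s \<subseteq> subG K G (EndS K G s)"
  proof
    fix s assume s: "s \<in> KG K G"
    show "(\<exists>!B. G_basic G B \<and> (\<exists>k. \<forall>i\<ge>k. s i \<in> B \<and> (shift ^^ i) s \<in> subG K G B)) \<and>
        omegaS K G s \<subseteq> subG K G (EndS K G s)"
      using End_ex1[OF s] omega_sub[OF s] by (intro conjI)
  qed
  have hB: "\<forall>B. G_basic G B \<longrightarrow> S_basic K G (subG K G B) \<and> top_transitive K G (subG K G B)"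
  proof (intro allI impI conjI)
    fix B assume B: "G_basic G B"
    show "S_basic K G (subG K G B)" by (rule S_basic_BG[OF B])
    show "top_transitive K G (subG K G B)" by (rule BG_trans[OF B])
  qed
  have hBij: "bij_betw (subG K G) {B. G_basic G B} {C. S_basic K G C}" by (rule BG_bij)
  have hC: "\<forall>A. A \<subseteq> K \<longrightarrow>
        ((G\<^sup>+ `` A \<subseteq> A) \<longleftrightarrow> (\<forall>s\<in>KG K G. s \<in> subG K G A \<longleftrightarrow> s 0 \<in> A)) \<and>
        ((G\<^sup>+ `` A \<subseteq> A) \<longrightarrow>
            chainS K G `` subG K G A \<subseteq> subG K G A \<and>
            openin (KGtop K G) (subG K G A) \<and> closedin (KGtop K G) (subG K G A) \<and>
            openin (KGtop K G) {s \<in> KG K G. EndS K G s \<subseteq> A})"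
  proof (intro allI impI conjI)
    fix A assume A: "A \<subseteq> K"
    show "(G\<^sup>+ `` A \<subseteq> A) \<longleftrightarrow> (\<forall>s\<in>KG K G. s \<in> subG K G A \<longleftrightarrow> s 0 \<in> A)" by (rule inv_iff[OF A])
    assume inv: "G\<^sup>+ `` A \<subseteq> A"
    show "chainS K G `` subG K G A \<subseteq> subG K G A" by (rule inv_chain[OF inv])
    show "openin (KGtop K G) (subG K G A)" by (rule inv_open[OF inv])
    show "closedin (KGtop K G) (subG K G A)" by (rule inv_closed[OF A inv])
    show "openin (KGtop K G) {s \<in> KG K G. EndS K G s \<subseteq> A}" by (rule inv_End_open[OF inv])
  qed
  have hD: "\<forall>s\<in>K. \<exists>x\<in>KG K G. x 0 = s \<and> G_terminal G (EndS K G x)"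
    using part_d by blast
  have hE: "\<forall>B. G_basic G B \<longrightarrow>
        (G_terminal G B \<longleftrightarrow> S_terminal K G (subG K G B)) \<and>
        (G_terminal G B \<longleftrightarrow> visible K G (subG K G B)) \<and>
        (G_terminal G B \<longleftrightarrow> (openin (KGtop K G) (subG K G B) \<and> closedin (KGtop K G) (subG K G B))) \<and>
        (G_terminal G B \<longleftrightarrow> attractor K G (subG K G B)) \<and>
        (G_terminal G B \<longleftrightarrow> openin (KGtop K G) {s \<in> KG K G. EndS K G s = B})"
  proof (intro allI impI)
    fix B assume B: "G_basic G B"
    show "(G_terminal G B \<longleftrightarrow> S_terminal K G (subG K G B)) \<and>
        (G_terminal G B \<longleftrightarrow> visible K G (subG K G B)) \<and>
        (G_terminal G B \<longleftrightarrow> (openin (KGtop K G) (subG K G B) \<and> closedin (KGtop K G) (subG K G B))) \<and>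
        (G_terminal G B \<longleftrightarrow> attractor K G (subG K G B)) \<and>
        (G_terminal G B \<longleftrightarrow> openin (KGtop K G) {s \<in> KG K G. EndS K G s = B})"
      using e1[OF B] e2[OF B] e3[OF B] e4[OF B] e5[OF B] by (intro conjI)
  qed
  have hF1: "openin (KGtop K G) {s \<in> KG K G. G_terminal G (EndS K G s)}" by (rule f_open)
  have hF2: "(KGtop K G) closure_of {s \<in> KG K G. G_terminal G (EndS K G s)} = KG K G" by (rule f_dense)
  show ?thesis unfolding OG_eq
    using hA hB hBij hC hD hE hF1 hF2 by (intro conjI)
qed


end
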